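(* Let $M$ be a left cancellative monoid which is strongly $\delta$-hyperbolic (for some real $\delta \geq 0$) with respect to some finite generating set. Then $M$ is finitely presented, and (any finite presentation of) $M$ has Dehn function bounded above by a polynomial of degree $\log_{4/3} 5 + 1$.
   Context: Directed graphs may have loops and multiple edges. For vertices $u,v$ of a directed graph, $d(u,v)$ is the length of a shortest directed path from $u$ to $v$, or $\infty$ if there is none. The out-ball is $\overrightarrow{\mathcal{B}}_r(x)=\{y : d(x,y)\le r\}$ and the in-ball is $\overleftarrow{\mathcal{B}}_r(x)=\{y : d(y,x)\le r\}$; for a set $S$ of vertices these denote the unions over $x\in S$. A path of length $n$ is a sequence $[x_0,\dots,x_n]$ of vertices with an edge from $x_i$ to $x_{i+1}$ for each $i$; it is a geodesic if $n=d(x_0,x_n)$. Paths $p,q$ are composable if the end of $p$ is the start of $q$ (then $p\circ q$ is their concatenation), and parallel if they have the same start and the same end. A directed geodesic triangle is an ordered triple $(p,q,r)$ of geodesics with $p,q$ composable and $p\circ q$ parallel to $r$. It is $\delta$-thin if (identifying a path with its vertex set) every vertex of $r$ lies in $\overrightarrow{\mathcal{B}}_\delta(p)\cup\overleftarrow{\mathcal{B}}_\delta(q)$, every vertex of $p$ lies in $\overrightarrow{\mathcal{B}}_\delta(r)\cup\overleftarrow{\mathcal{B}}_\delta(q)$, and every vertex of $q$ lies in $\overrightarrow{\mathcal{B}}_\delta(p)\cup\overleftarrow{\mathcal{B}}_\delta(r)$. A directed graph is strongly $\delta$-hyperbolic if all its directed geodesic triangles are $\delta$-thin. For a monoid $M$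 generated by a finite set $A$, the right Cayley graph has vertex set $M$ and an edge from $m$ to $n$ for each $a\in A$ with $ma=n$; $M$ is strongly $\delta$-hyperbolic with respect to $A$ if this graph is strongly $\delta$-hyperbolic. For a monoid presentation $\langle A\mid R\rangle$ and words $u,v$ equal in the monoid, the area $A(u,v)$ is the least number of applications of relations from $R$ needed to transform $u$ into $v$; the Dehn function is $n\mapsto\max\{A(u,v) : u,v\in A^*, u=v \text{ in the monoid}, |u|+|v|\le n\}$. Dehn functions are compared up to the equivalence $f\sim g$ where $f\prec g$ means $f(j)\le a g(aj)+aj$ for some constant $a$ and all $j$; Dehn functions of different finite presentations of the same monoid are equivalent. *)

theory Defs
  imports Complex_Main "HOL-Library.Extended_Nat"
begin

definition cayley_edge :: "'m::monoid_mult set \<Rightarrow> 'm \<Rightarrow> 'm \<Rightarrow> bool" where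
  "cayley_edge A m n \<longleftrightarrow> (\<exists>a\<in>A. m * a = n)"

definition is_path :: "'m::monoid_mult set \<Rightarrow> 'm list \<Rightarrow> bool" where
  "is_path A p \<longleftrightarrow> p \<noteq> [] \<and> (\<forall>i. Suc i < length p \<longrightarrow> cayley_edge A (p ! i) (p ! Suc i))"

definition plen :: "'a list \<Rightarrow> nat" where
  "plen p = length p - 1"

text \<open>Directed distance; infinity if there is no directed path.\<close>
definition cdist :: "'m::monoid_mult set \<Rightarrow> 'm \<Rightarrow> 'm \<Rightarrow> enat" where
  "cdist A u v = Inf {enat (plen p) | p. is_path A p \<and> hd p = u \<and> last p = v}"

definition geodesic :: "'m::monoid_mult set \<Rightarrow> 'm list \<Rightarrow> bool" where
  "geodesic A p \<longleftrightarrow> is_path A p \<and> enat (plen p) = cdist A (hd p) (last p)"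

definition dist_le :: "enat \<Rightarrow> real \<Rightarrow> bool" where
  "dist_le d r \<longleftrightarrow> (\<exists>n. d = enat n \<and> real n \<le> r)"

definition out_ball :: "'m::monoid_mult set \<Rightarrow> real \<Rightarrow> 'm set \<Rightarrow> 'm set" where
  "out_ball A r S = {y. \<exists>x\<in>S. dist_le (cdist A x y) r}"

definition in_ball :: "'m::monoid_mult set \<Rightarrow> real \<Rightarrow> 'm set \<Rightarrow> 'm set" where
  "in_ball A r S = {y. \<exists>x\<in>S. dist_le (cdist A y x) r}"

definition geodesic_triangle :: "'m::monoid_mult set \<Rightarrow> 'm list \<Rightarrow> 'm list \<Rightarrow> 'm list \<Rightarrow> bool" where
  "geodesic_triangle A p q r \<longleftrightarrow> geodesic A p \<and> geodesic A q \<and> geodesic A r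
     \<and> last p = hd q \<and> hd r = hd p \<and> last r = last q"

definition thin_triangle :: "'m::monoid_mult set \<Rightarrow> real \<Rightarrow> 'm list \<Rightarrow> 'm list \<Rightarrow> 'm list \<Rightarrow> bool" where
  "thin_triangle A \<delta> p q r \<longleftrightarrow>
      set r \<subseteq> out_ball A \<delta> (set p) \<union> in_ball A \<delta> (set q)
    \<and> set p \<subseteq> out_ball A \<delta> (set r) \<union> in_ball A \<delta> (set q)
    \<and> set q \<subseteq> out_ball A \<delta> (set p) \<union> in_ball A \<delta> (set r)"

definition strongly_hyperbolic :: "'m::monoid_mult set \<Rightarrow> real \<Rightarrow> bool" where
  "strongly_hyperbolic A \<delta> \<longleftrightarrow>
     (\<forall>p q r. geodesic_triangle A p q r \<longrightarrow> thin_triangle A \<delta> p q r)"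

definition generates :: "'m::monoid_mult set \<Rightarrow> bool" where
  "generates A \<longleftrightarrow> (\<forall>m. \<exists>w\<in>lists A. prod_list w = m)"

definition left_cancellative :: "'m::monoid_mult itself \<Rightarrow> bool" where
  "left_cancellative _ \<longleftrightarrow> (\<forall>a b c :: 'm. a * b = a * c \<longrightarrow> b = c)"

text \<open>Alphabet: a finite set of natural numbers; \<phi> sends letters to generators of M.\<close>
definition eval_word :: "(nat \<Rightarrow> 'm::monoid_mult) \<Rightarrow> nat list \<Rightarrow> 'm" where
  "eval_word \<phi> w = prod_list (map \<phi> w)"

definition rstep :: "(nat list \<times> nat list) set \<Rightarrow> (nat list \<times> nat list) set" where
  "rstep R = {(x @ l @ y, x @ r @ y) | x y l r. (l, r) \<in> R \<or> (r, l) \<in> R}"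

definition is_presentation ::
  "nat set \<Rightarrow> (nat list \<times> nat list) set \<Rightarrow> (nat \<Rightarrow> 'm::monoid_mult) \<Rightarrow> bool" where
  "is_presentation G R \<phi> \<longleftrightarrow> R \<subseteq> lists G \<times> lists G
     \<and> (\<forall>m. \<exists>w\<in>lists G. eval_word \<phi> w = m)
     \<and> (\<forall>u\<in>lists G. \<forall>v\<in>lists G. eval_word \<phi> u = eval_word \<phi> v \<longleftrightarrow> (u, v) \<in> (rstep R)\<^sup>*)"

definition finite_presentation ::
  "nat set \<Rightarrow> (nat list \<times> nat list) set \<Rightarrow> (nat \<Rightarrow> 'm::monoid_mult) \<Rightarrow> bool" where
  "finite_presentation G R \<phi> \<longleftrightarrow> finite G \<and> finite R \<and> is_presentation G R \<phi>"

definition area :: "(nat list \<times> nat list) set \<Rightarrow> nat list \<Rightarrow> nat list \<Rightarrow> nat" where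
  "area R u v = (LEAST n. (u, v) \<in> (rstep R) ^^ n)"

definition dehn :: "nat set \<Rightarrow> (nat list \<times> nat list) set \<Rightarrow> (nat \<Rightarrow> 'm::monoid_mult) \<Rightarrow> nat \<Rightarrow> nat" where
  "dehn G R \<phi> n = Max {area R u v | u v. u \<in> lists G \<and> v \<in> lists G
      \<and> eval_word \<phi> u = eval_word \<phi> v \<and> length u + length v \<le> n}"

text \<open>f \<prec> (j \<mapsto> j powr \<alpha>): f j \<le> a g(a j) + a j for some constant a.\<close>
definition dehn_le_power :: "(nat \<Rightarrow> nat) \<Rightarrow> real \<Rightarrow> bool" where
  "dehn_le_power f \<alpha> \<longleftrightarrow>
     (\<exists>a::real. a > 0 \<and> (\<forall>j. real (f j) \<le> a * (a * real j) powr \<alpha> + a * real j))"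

end

theory Submission
  imports Defs
begin


definition ar :: "(nat list \<times> nat list) set \<Rightarrow> nat list \<Rightarrow> nat list \<Rightarrow> nat \<Rightarrow> bool" where
  "ar R u v n \<longleftrightarrow> (\<exists>k\<le>n. (u, v) \<in> (rstep R) ^^ k)"

lemma ar_refl: "ar R u u n"
  unfolding ar_def by (rule exI[of _ 0]) auto

lemma ar_mono: "ar R u v n \<Longrightarrow> n \<le> m \<Longrightarrow> ar R u v m"
  unfolding ar_def by (meson order_trans)

lemma ar_trans: "ar R u v n \<Longrightarrow> ar R v w m \<Longrightarrow> ar R u w (n + m)"
  unfolding ar_def
proof -
  assume "\<exists>k\<le>n. (u, v) \<in> rstep R ^^ k" "\<exists>k\<le>m. (v, w) \<in> rstep R ^^ k"
  then obtain k1 k2 where "k1 \<le> n" "(u, v) \<in> rstep R ^^ k1" "k2 \<le> m" "(v, w) \<in> rstep R ^^ k2" by blast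
  then have "(u, w) \<in> rstep R ^^ (k1 + k2)" by (simp add: relpow_add relcomp.relcompI)
  then show "\<exists>k\<le>n + m. (u, w) \<in> rstep R ^^ k" using \<open>k1 \<le> n\<close> \<open>k2 \<le> m\<close> by (intro exI[of _ "k1+k2"]) auto
qed

lemma rstep_sym: "(u, v) \<in> rstep R \<Longrightarrow> (v, u) \<in> rstep R"
  unfolding rstep_def by blast

lemma relpow_rstep_sym: "(u, v) \<in> rstep R ^^ k \<Longrightarrow> (v, u) \<in> rstep R ^^ k"
proof (induction k arbitrary: v)
  case 0 then show ?case by simp
next
  case (Suc k)
  then obtain y where "(u, y) \<in> rstep R ^^ k" "(y, v) \<in> rstep R" by auto
  then have "(y, u) \<in> rstep R ^^ k" "(v, y) \<in> rstep R" using Suc.IH rstep_sym by auto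
  then show ?case by (meson relpow_Suc_I2)
qed

lemma ar_sym: "ar R u v n \<Longrightarrow> ar R v u n"
  unfolding ar_def using relpow_rstep_sym by blast

lemma rstep_ctx: "(u, v) \<in> rstep R \<Longrightarrow> (x @ u @ y, x @ v @ y) \<in> rstep R"
proof -
  assume "(u, v) \<in> rstep R"
  then obtain a b l r where "u = a @ l @ b" "v = a @ r @ b" "(l, r) \<in> R \<or> (r, l) \<in> R"
    unfolding rstep_def by blast
  then show ?thesis unfolding rstep_def
    by (intro CollectI exI[of _ "x @ a"] exI[of _ "b @ y"] exI[of _ l] exI[of _ r]) auto
qed

lemma relpow_ctx: "(u, v) \<in> rstep R ^^ k \<Longrightarrow> (x @ u @ y, x @ v @ y) \<in> rstep R ^^ k"
proof (induction k arbitrary: v)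
  case 0 then show ?case by simp
next
  case (Suc k)
  then obtain z where "(u, z) \<in> rstep R ^^ k" "(z, v) \<in> rstep R" by auto
  then show ?case using Suc.IH rstep_ctx by (meson relpow_Suc_I)
qed

lemma ar_ctx: "ar R u v n \<Longrightarrow> ar R (x @ u @ y) (x @ v @ y) n"
  unfolding ar_def using relpow_ctx by blast

lemma ar_ctxL: "ar R u v n \<Longrightarrow> ar R (x @ u) (x @ v) n"
  using ar_ctx[of R u v n x "[]"] by simp

lemma ar_ctxR: "ar R u v n \<Longrightarrow> ar R (u @ y) (v @ y) n"
  using ar_ctx[of R u v n "[]" y] by simp

lemma ar_rel: "(u, v) \<in> R \<Longrightarrow> ar R u v 1"
proof -
  assume "(u, v) \<in> R"
  then have "(u, v) \<in> rstep R" unfolding rstep_def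
    by (intro CollectI exI[of _ "[]"] exI[of _ "[]"] exI[of _ u] exI[of _ v]) auto
  then show ?thesis unfolding ar_def by (intro exI[of _ 1]) auto
qed

lemma ar_area: "ar R u v n \<Longrightarrow> area R u v \<le> n"
  unfolding ar_def area_def by (meson Least_le order_trans)

lemma rtrancl_ar: "(u, v) \<in> (rstep R)\<^sup>* \<Longrightarrow> \<exists>n. ar R u v n"
  unfolding ar_def by (meson order_refl rtrancl_power)

lemma ar_rtrancl: "ar R u v n \<Longrightarrow> (u, v) \<in> (rstep R)\<^sup>*"
  unfolding ar_def using relpow_imp_rtrancl by blast




lemma is_path_Cons2: "is_path A (x # y # ps) \<longleftrightarrow> cayley_edge A x y \<and> is_path A (y # ps)"
  unfolding is_path_def
proof safe
  fix i assume "\<forall>i. Suc i < length (x # y # ps) \<longrightarrow> cayley_edge A ((x # y # ps) ! i) ((x # y # ps) ! Suc i)"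
    "Suc i < length (y # ps)"
  then show "cayley_edge A ((y # ps) ! i) ((y # ps) ! Suc i)"
    by (metis Suc_less_eq length_Cons nth_Cons_Suc)
next
  assume "\<forall>i. Suc i < length (x # y # ps) \<longrightarrow> cayley_edge A ((x # y # ps) ! i) ((x # y # ps) ! Suc i)"
  then show "cayley_edge A x y" by force
next
  fix i assume "cayley_edge A x y" "\<forall>i. Suc i < length (y # ps) \<longrightarrow> cayley_edge A ((y # ps) ! i) ((y # ps) ! Suc i)"
    "Suc i < length (x # y # ps)"
  then show "cayley_edge A ((x # y # ps) ! i) ((x # y # ps) ! Suc i)"
    by (cases i) auto
qed

lemma path_to_word:
  fixes A :: "'m::monoid_mult set"
  shows "is_path A p \<Longrightarrow> \<exists>as\<in>lists A. length as = plen p \<and> hd p * prod_list as = last p"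
proof (induction p)
  case Nil then show ?case by (simp add: is_path_def)
next
  case (Cons x ps)
  show ?case
  proof (cases ps)
    case Nil then show ?thesis by (simp add: plen_def)
  next
    case (Cons y qs)
    with Cons.prems have e: "cayley_edge A x y" and p: "is_path A ps" using is_path_Cons2 by auto
    from Cons.IH[OF p] obtain as where as: "as \<in> lists A" "length as = plen ps" "hd ps * prod_list as = last ps" by blast
    from e obtain a where a: "a \<in> A" "x * a = y" unfolding cayley_edge_def by blast
    show ?thesis
      by (rule bexI[of _ "a # as"]) (use as a Cons in \<open>auto simp: plen_def mult.assoc\<close>)
  qed
qed

definition wpath :: "'m::monoid_mult \<Rightarrow> 'm list \<Rightarrow> 'm list" where
  "wpath x as = map (\<lambda>i. x * prod_list (take i as)) [0..<Suc (length as)]"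

lemma wpath_simps:
  "wpath x as \<noteq> []" "hd (wpath x as) = x" "last (wpath x as) = x * prod_list as"
  "plen (wpath x as) = length as"
  "set (wpath x as) = {x * prod_list (take i as) | i. i \<le> length as}"
  unfolding wpath_def plen_def
  by (auto simp: hd_map last_map simp del: upt_Suc)

lemma wpath_path:
  assumes "as \<in> lists A" shows "is_path A (wpath x as)"
  unfolding is_path_def
proof safe
  show "wpath x as = [] \<Longrightarrow> False" using wpath_simps by blast
  fix i assume i: "Suc i < length (wpath x as)"
  then have il: "i < length as" unfolding wpath_def by simp
  have "wpath x as ! i = x * prod_list (take i as)" "wpath x as ! Suc i = x * prod_list (take (Suc i) as)"
    using i unfolding wpath_def by (auto simp del: upt_Suc)
  moreover have "prod_list (take (Suc i) as) = prod_list (take i as) * as ! i"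
    using il by (simp add: take_Suc_conv_app_nth)
  ultimately show "cayley_edge A (wpath x as ! i) (wpath x as ! Suc i)"
    unfolding cayley_edge_def using assms il by (auto simp: mult.assoc)
qed

lemma cdist_le_iff:
  fixes A :: "'m::monoid_mult set"
  shows "cdist A x y \<le> enat n \<longleftrightarrow> (\<exists>as\<in>lists A. length as \<le> n \<and> x * prod_list as = y)"
proof
  assume "cdist A x y \<le> enat n"
  define S where "S = {enat (plen p) | p. is_path A p \<and> hd p = x \<and> last p = y}"
  have cd: "cdist A x y = Inf S" unfolding cdist_def S_def by simp
  have "S \<noteq> {}" using \<open>cdist A x y \<le> enat n\<close> cd by (auto simp: Inf_enat_def)
  then have "Inf S \<in> S" by (simp add: Inf_enat_def) (metis LeastI ex_in_conv)
  then obtain p where p: "is_path A p" "hd p = x" "last p = y" "cdist A x y = enat (plen p)"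
    unfolding S_def cd by auto
  then obtain as where "as \<in> lists A" "length as = plen p" "x * prod_list as = y"
    using path_to_word by blast
  then show "\<exists>as\<in>lists A. length as \<le> n \<and> x * prod_list as = y"
    using p(4) \<open>cdist A x y \<le> enat n\<close> by (intro bexI[of _ as]) auto
next
  assume "\<exists>as\<in>lists A. length as \<le> n \<and> x * prod_list as = y"
  then obtain as where as: "as \<in> lists A" "length as \<le> n" "x * prod_list as = y" by blast
  have "cdist A x y \<le> enat (plen (wpath x as))"
    unfolding cdist_def using wpath_path[OF as(1)] as(3)
    by (intro Inf_lower CollectI exI[of _ "wpath x as"]) (auto simp: wpath_simps)
  then show "cdist A x y \<le> enat n" using as(2) wpath_simps(4) by (metis enat_ord_simps(1) order_trans)
qed

lemma dist_le_enat: "dist_le d r \<Longrightarrow> d \<le> enat (nat \<lceil>r\<rceil>)"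
  unfolding dist_le_def by (auto simp: le_nat_iff) (metis ceiling_mono ceiling_of_nat)

lemma geodesic_wpath:
  fixes A :: "'m::monoid_mult set"
  assumes "as \<in> lists A" and "\<And>bs. bs \<in> lists A \<Longrightarrow> x * prod_list bs = x * prod_list as \<Longrightarrow> length as \<le> length bs"
  shows "geodesic A (wpath x as)"
proof -
  have c1: "cdist A x (x * prod_list as) \<le> enat (length as)"
    using cdist_le_iff assms(1) by blast
  have c2: "\<not> cdist A x (x * prod_list as) \<le> enat n" if "n < length as" for n
    using cdist_le_iff assms that by (metis leD order_le_less_trans)
  have "cdist A x (x * prod_list as) = enat (length as)"
  proof (cases "cdist A x (x * prod_list as)")
    case (enat m)
    then show ?thesis using c1 c2 by (metis enat_ord_simps(1) le_neq_implies_less order_refl)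
  next
    case infinity then show ?thesis using c1 c2 by simp
  qed
  then show ?thesis unfolding geodesic_def using wpath_path[OF assms(1)] by (simp add: wpath_simps)
qed




locale hyp =
  fixes A :: "'m::monoid_mult set" and \<delta> :: real and N :: nat and \<phi> :: "nat \<Rightarrow> 'm"
  assumes lc: "\<And>a b c::'m. a * b = a * c \<Longrightarrow> b = c"
    and gen: "generates A"
    and img: "\<phi> ` {..<N} = A"
    and hyp: "strongly_hyperbolic A \<delta>"
begin

definition D :: nat where "D = nat \<lceil>\<delta>\<rceil>"
abbreviation Gs :: "nat set" where "Gs \<equiv> {..<N}"
definition ev :: "nat list \<Rightarrow> 'm" where "ev w = eval_word \<phi> w"
definition geo :: "nat list \<Rightarrow> bool" where
  "geo w \<longleftrightarrow> w \<in> lists Gs \<and> (\<forall>u\<in>lists Gs. ev u = ev w \<longrightarrow> length w \<le> length u)"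
definition reach :: "'m \<Rightarrow> 'm \<Rightarrow> bool" where
  "reach x y \<longleftrightarrow> (\<exists>w\<in>lists Gs. length w \<le> D \<and> x * ev w = y)"

lemma ev_simps[simp]: "ev [] = 1" "ev (a # w) = \<phi> a * ev w" "ev (u @ v) = ev u * ev v"
  unfolding ev_def eval_word_def by auto

lemma toG: "as \<in> lists A \<Longrightarrow> \<exists>w\<in>lists Gs. length w = length as \<and> ev w = prod_list as"
proof (induction as)
  case Nil then show ?case by (intro bexI[of _ "[]"]) auto
next
  case (Cons a as)
  then obtain w where w: "w \<in> lists Gs" "length w = length as" "ev w = prod_list as" by auto
  from Cons.prems img obtain i where "i < N" "\<phi> i = a" by auto
  then show ?case using w by (intro bexI[of _ "i # w"]) auto
qed

lemma mapG: "w \<in> lists Gs \<Longrightarrow> map \<phi> w \<in> lists A" using img by auto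

lemma prod_map: "prod_list (map \<phi> w) = ev w" unfolding ev_def eval_word_def by simp

lemma word_exists: "\<exists>w\<in>lists Gs. ev w = x"
proof -
  from gen obtain as where "as \<in> lists A" "prod_list as = x" unfolding generates_def by blast
  then show ?thesis using toG by metis
qed

lemma geo_exists: "\<exists>w. geo w \<and> ev w = x"
proof -
  define P where "P n \<longleftrightarrow> (\<exists>w\<in>lists Gs. length w = n \<and> ev w = x)" for n
  obtain w0 where "w0 \<in> lists Gs" "ev w0 = x" using word_exists by blast
  then have "P (length w0)" unfolding P_def by blast
  then have "P (LEAST n. P n)" by (rule LeastI)
  then obtain w where w: "w \<in> lists Gs" "length w = (LEAST n. P n)" "ev w = x" unfolding P_def by blast
  have "geo w" unfolding geo_def
  proof (intro conjI ballI impI)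
    fix u assume "u \<in> lists Gs" "ev u = ev w"
    then have "P (length u)" unfolding P_def using w by blast
    then show "length w \<le> length u" using w(2) by (simp add: Least_le)
  qed (use w in auto)
  then show ?thesis using w by blast
qed

lemma geo_lists: "geo w \<Longrightarrow> w \<in> lists Gs" unfolding geo_def by blast

lemma geo_le: "geo w \<Longrightarrow> u \<in> lists Gs \<Longrightarrow> ev u = ev w \<Longrightarrow> length w \<le> length u"
  unfolding geo_def by blast

lemma geo_append: assumes "geo (u @ v)" shows "geo u" "geo v"
proof -
  have uv: "u \<in> lists Gs" "v \<in> lists Gs" using geo_lists[OF assms] by auto
  show "geo u" unfolding geo_def
  proof (intro conjI ballI impI)
    fix u' assume "u' \<in> lists Gs" "ev u' = ev u"
    then have "length (u @ v) \<le> length (u' @ v)" using geo_le[OF assms, of "u' @ v"] uv by auto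
    then show "length u \<le> length u'" by simp
  qed (use uv in auto)
  show "geo v" unfolding geo_def
  proof (intro conjI ballI impI)
    fix v' assume "v' \<in> lists Gs" "ev v' = ev v"
    then have "length (u @ v) \<le> length (u @ v')" using geo_le[OF assms, of "u @ v'"] uv by auto
    then show "length v \<le> length v'" by simp
  qed (use uv in auto)
qed

lemma geo_take: "geo w \<Longrightarrow> geo (take i w)"
  using geo_append(1)[of "take i w" "drop i w"] by simp
lemma geo_drop: "geo w \<Longrightarrow> geo (drop i w)"
  using geo_append(2)[of "take i w" "drop i w"] by simp

lemma geo_Nil: "geo []" unfolding geo_def by auto

lemma ev_take_drop: "ev (take i w) * ev (drop i w) = ev w"
  by (metis append_take_drop_id ev_simps(3))

lemma dist_reach: "dist_le (cdist A x y) \<delta> \<Longrightarrow> reach x y"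
proof -
  assume "dist_le (cdist A x y) \<delta>"
  then have "cdist A x y \<le> enat D" unfolding D_def by (rule dist_le_enat)
  then obtain as where "as \<in> lists A" "length as \<le> D" "x * prod_list as = y" using cdist_le_iff by blast
  then show "reach x y" unfolding reach_def using toG by metis
qed

lemma geo_geodesic: assumes "geo p" shows "geodesic A (wpath x (map \<phi> p))"
proof (rule geodesic_wpath)
  show "map \<phi> p \<in> lists A" using mapG geo_lists assms by blast
  fix bs assume bs: "bs \<in> lists A" "x * prod_list bs = x * prod_list (map \<phi> p)"
  then have "prod_list bs = ev p" using lc prod_map by metis
  then obtain w where "w \<in> lists Gs" "length w = length bs" "ev w = ev p" using toG[OF bs(1)] by metis
  then show "length (map \<phi> p) \<le> length bs" using geo_le[OF assms] by fastforce
qed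

lemma wpath_set_map: "set (wpath x (map \<phi> p)) = {x * ev (take i p) | i. i \<le> length p}"
  by (simp add: wpath_simps take_map prod_map)

lemma thin_words:
  assumes "geo p" "geo q" "geo r" "ev p * ev q = ev r"
  shows "\<And>j. j \<le> length r \<Longrightarrow> (\<exists>i\<le>length p. reach (ev (take i p)) (ev (take j r)))
              \<or> (\<exists>k\<le>length q. reach (ev (take j r)) (ev p * ev (take k q)))"
    and "\<And>i. i \<le> length p \<Longrightarrow> (\<exists>j\<le>length r. reach (ev (take j r)) (ev (take i p)))
              \<or> (\<exists>k\<le>length q. reach (ev (take i p)) (ev p * ev (take k q)))"
    and "\<And>k. k \<le> length q \<Longrightarrow> (\<exists>i\<le>length p. reach (ev (take i p)) (ev p * ev (take k q)))
              \<or> (\<exists>j\<le>length r. reach (ev p * ev (take k q)) (ev (take j r)))"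
proof -
  define P where "P = wpath 1 (map \<phi> p)"
  define Q where "Q = wpath (ev p) (map \<phi> q)"
  define R where "R = wpath 1 (map \<phi> r)"
  have tri: "geodesic_triangle A P Q R" unfolding geodesic_triangle_def P_def Q_def R_def
    using geo_geodesic assms by (simp add: wpath_simps prod_map)
  then have th: "thin_triangle A \<delta> P Q R" using hyp unfolding strongly_hyperbolic_def by blast
  have sP: "set P = {ev (take i p) | i. i \<le> length p}" unfolding P_def wpath_set_map by simp
  have sQ: "set Q = {ev p * ev (take k q) | k. k \<le> length q}" unfolding Q_def wpath_set_map by simp
  have sR: "set R = {ev (take j r) | j. j \<le> length r}" unfolding R_def wpath_set_map by simp
  {
    fix j assume "j \<le> length r"
    then have "ev (take j r) \<in> set R" unfolding sR by blast
    then have "ev (take j r) \<in> out_ball A \<delta> (set P) \<union> in_ball A \<delta> (set Q)"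
      using th unfolding thin_triangle_def by blast
    then show "(\<exists>i\<le>length p. reach (ev (take i p)) (ev (take j r)))
              \<or> (\<exists>k\<le>length q. reach (ev (take j r)) (ev p * ev (take k q)))"
      unfolding out_ball_def in_ball_def sP sQ using dist_reach by blast
  }
  {
    fix i assume "i \<le> length p"
    then have "ev (take i p) \<in> set P" unfolding sP by blast
    then have "ev (take i p) \<in> out_ball A \<delta> (set R) \<union> in_ball A \<delta> (set Q)"
      using th unfolding thin_triangle_def by blast
    then show "(\<exists>j\<le>length r. reach (ev (take j r)) (ev (take i p)))
              \<or> (\<exists>k\<le>length q. reach (ev (take i p)) (ev p * ev (take k q)))"
      unfolding out_ball_def in_ball_def sR sQ using dist_reach by blast
  }
  {
    fix k assume "k \<le> length q"
    then have "ev p * ev (take k q) \<in> set Q" unfolding sQ by blast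
    then have "ev p * ev (take k q) \<in> out_ball A \<delta> (set P) \<union> in_ball A \<delta> (set R)"
      using th unfolding thin_triangle_def by blast
    then show "(\<exists>i\<le>length p. reach (ev (take i p)) (ev p * ev (take k q)))
              \<or> (\<exists>j\<le>length r. reach (ev p * ev (take k q)) (ev (take j r)))"
      unfolding out_ball_def in_ball_def sP sR using dist_reach by blast
  }
qed

end



definition bnd :: "nat \<Rightarrow> nat" where "bnd m = 30 * (m + 1) ^ 5"

lemma pow5_bound:
  fixes x B :: nat assumes "x \<le> B" shows "x ^ 5 \<le> B ^ 4 * x"
proof -
  have "x ^ 4 \<le> B ^ 4" using assms by (rule power_mono) simp
  then have "x ^ 4 * x \<le> B ^ 4 * x" by simp
  then show ?thesis by (simp add: power_Suc2[symmetric] del: power_Suc)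
qed

lemma combine:
  fixes p1 p2 p3 e m :: nat
  assumes "6*(p1+1) \<le> 5*(m+1)" "6*(p2+1) \<le> 5*(m+1)" "6*(p3+1) \<le> 5*(m+1)"
    "3*(p1+p2+p3+3) \<le> 5*(m+1)" "e \<le> m + 5"
  shows "bnd p1 + bnd p2 + bnd p3 + e \<le> bnd m"
proof -
  define n where "n = 5*(m+1)"
  have a1: "(6*(p1+1))^5 \<le> n^4 * (6*(p1+1))" using pow5_bound assms(1) n_def by blast
  have a2: "(6*(p2+1))^5 \<le> n^4 * (6*(p2+1))" using pow5_bound assms(2) n_def by blast
  have a3: "(6*(p3+1))^5 \<le> n^4 * (6*(p3+1))" using pow5_bound assms(3) n_def by blast
  have "n^4 * (6*(p1+1)) + n^4 * (6*(p2+1)) + n^4 * (6*(p3+1)) = n^4 * (2 * (3*(p1+p2+p3+3)))"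
    by (simp add: algebra_simps)
  also have "\<dots> \<le> n^4 * (2 * n)" using assms(4) n_def by simp
  also have "n^4 * (2 * n) = 2 * n^5" by (simp add: eval_nat_numeral algebra_simps)
  finally have s: "(6*(p1+1))^5 + (6*(p2+1))^5 + (6*(p3+1))^5 \<le> 2 * n^5"
    using a1 a2 a3 by linarith
  have "(6*(p1+1))^5 = 7776*(p1+1)^5" "(6*(p2+1))^5 = 7776*(p2+1)^5" "(6*(p3+1))^5 = 7776*(p3+1)^5"
    by (simp_all only: power_mult_distrib) simp_all
  then have "7776 * ((p1+1)^5 + (p2+1)^5 + (p3+1)^5) \<le> 2 * n^5"
    using s unfolding distrib_left by linarith
  moreover have "n^5 = 3125*(m+1)^5" unfolding n_def by (simp only: power_mult_distrib) simp
  ultimately have s2: "7776 * ((p1+1)^5 + (p2+1)^5 + (p3+1)^5) \<le> 6250 * (m+1)^5"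
    by linarith
  have "m + 1 \<le> (m+1)^5" by (simp add: self_le_power)
  then have "7776 * e \<le> 7776 * 5 * (m+1)^5" using assms(5) by linarith
  then have "7776 * (bnd p1 + bnd p2 + bnd p3 + e) \<le> 7776 * bnd m"
    using s2 unfolding bnd_def distrib_left by linarith
  then show ?thesis by simp
qed

definition PB :: "nat \<Rightarrow> nat" where "PB n = (n + 1) * bnd (2 * n)"

lemma bnd_ge1: "1 \<le> bnd m" unfolding bnd_def by simp

context hyp begin

definition C :: nat where "C = D + 1"
definition M0 :: nat where "M0 = 200 * D + 200"
definition K :: nat where "K = 210 * D + 220"
definition R0 :: "(nat list \<times> nat list) set" where
  "R0 = {(u, v). u \<in> lists Gs \<and> v \<in> lists Gs \<and> length u + length v \<le> K \<and> ev u = ev v}"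

definition Vi where "Vi g t h \<longleftrightarrow> geo g \<and> geo h \<and> t \<in> lists Gs \<and> length t \<le> C \<and> ev g * ev t = ev h"
definition Wi where "Wi s g h \<longleftrightarrow> geo g \<and> geo h \<and> s \<in> lists Gs \<and> length s \<le> C \<and> ev s * ev g = ev h"

lemma ar_R0: "u \<in> lists Gs \<Longrightarrow> v \<in> lists Gs \<Longrightarrow> length u + length v \<le> K \<Longrightarrow> ev u = ev v \<Longrightarrow> ar R0 u v 1"
  by (rule ar_rel) (simp add: R0_def)

lemma cancel: "ev a * x = ev a * y \<Longrightarrow> x = y" using lc by blast

lemma base_V:
  assumes "Vi g t h" "length g + length h < M0"
  shows "ar R0 (g @ t) h (bnd (length g + length h))"
proof -
  have "length (g @ t) + length h \<le> K" using assms unfolding Vi_def K_def M0_def C_def by simp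
  then have "ar R0 (g @ t) h 1"
    using assms geo_lists unfolding Vi_def by (intro ar_R0) auto
  then show ?thesis using ar_mono bnd_ge1 by blast
qed

lemma base_W:
  assumes "Wi s g h" "length g + length h < M0"
  shows "ar R0 (s @ g) h (bnd (length g + length h))"
proof -
  have "length (s @ g) + length h \<le> K" using assms unfolding Wi_def K_def M0_def C_def by simp
  then have "ar R0 (s @ g) h 1"
    using assms geo_lists unfolding Wi_def by (intro ar_R0) auto
  then show ?thesis using ar_mono bnd_ge1 by blast
qed

lemma V_large:
  assumes IH: "\<And>g t h. Vi g t h \<Longrightarrow> length g + length h < m \<Longrightarrow> ar R0 (g @ t) h (bnd (length g + length h))"
    and IH': "\<And>s g h. Wi s g h \<Longrightarrow> length g + length h < m \<Longrightarrow> ar R0 (s @ g) h (bnd (length g + length h))"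
    and V: "Vi g t h" and m: "m = length g + length h" "M0 \<le> m" and lg: "2 * length g \<le> 3 * length h"
  shows "ar R0 (g @ t) h (bnd m)"
proof -
  define G where "G = length g"
  define H where "H = length h"
  have gg: "geo g" and gh: "geo h" and tG: "t \<in> lists Gs" and tC: "length t \<le> C" and e: "ev g * ev t = ev h"
    using V unfolding Vi_def by auto
  obtain t' where t': "geo t'" "ev t' = ev t" using geo_exists by blast
  have t'C: "length t' \<le> C" using geo_le[OF t'(1) tG] t'(2) tC by simp
  have HGC: "H \<le> G + C" using geo_le[OF gh, of "g @ t"] geo_lists[OF gg] tG e tC unfolding G_def H_def by simp
  define j where "j = H div 2"
  have j: "2 * j \<le> H" "H \<le> 2 * j + 1" unfolding j_def by auto
  have e': "ev g * ev t' = ev h" using e t' by simp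
  have "j \<le> length h" using j H_def by simp
  from thin_words(1)[OF gg t'(1) gh e' this]
  consider (a) i where "i \<le> G" "reach (ev (take i g)) (ev (take j h))"
    | (b) k where "k \<le> length t'" "reach (ev (take j h)) (ev g * ev (take k t'))"
    unfolding G_def by blast
  then show ?thesis
  proof cases
    case b
    then obtain w where w: "w \<in> lists Gs" "length w \<le> D" "ev (take j h) * ev w = ev g * ev (take k t')"
      unfolding reach_def by blast
    have "ev (take j h @ w @ drop k t') = ev h"
      using w(3) e' ev_take_drop[of k t'] by (simp add: mult.assoc[symmetric]) (metis mult.assoc)
    then have "H \<le> length (take j h @ w @ drop k t')"
      using geo_le[OF gh] geo_lists[OF gh] w(1) geo_lists[OF t'(1)] unfolding H_def
      by (metis (no_types, lifting) append_in_lists_conv in_lists_conv_set in_set_dropD in_set_takeD)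
    then have "H \<le> j + D + C" using w(2) t'C by simp
    then have False using j m lg unfolding G_def H_def M0_def C_def by linarith
    then show ?thesis by blast
  next
    case a
    then obtain w where w: "w \<in> lists Gs" "length w \<le> D" "ev (take i g) * ev w = ev (take j h)"
      unfolding reach_def by blast
    have tig: "take i g \<in> lists Gs" using geo_lists[OF gg] by (meson in_lists_conv_set in_set_takeD)
    have "j \<le> length (take i g @ w)"
      using geo_le[OF geo_take[OF gh, of j], of "take i g @ w"] tig w \<open>j \<le> length h\<close> by simp
    then have ji: "j \<le> i + D" using w(2) a(1) unfolding G_def by simp
    obtain k where k: "geo k" "ev k = ev (drop i g @ t)" using geo_exists by blast
    have ek2: "ev w * ev (drop j h) = ev k"
    proof (rule cancel[of "take i g"])
      have "ev (take i g) * (ev w * ev (drop j h)) = ev h"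
        using w(3) ev_take_drop[of j h] by (simp add: mult.assoc[symmetric])
      also have "\<dots> = ev (take i g) * ev k"
        using k(2) e ev_take_drop[of i g] by (simp add: mult.assoc) (metis mult.assoc)
      finally show "ev (take i g) * (ev w * ev (drop j h)) = ev (take i g) * ev k" .
    qed
    have dh: "drop j h \<in> lists Gs" using geo_lists[OF gh] by (meson in_lists_conv_set in_set_dropD)
    have kl: "length k \<le> D + (H - j)"
      using geo_le[OF k(1), of "w @ drop j h"] ek2 w dh unfolding H_def by simp
    have VA: "Vi (take i g) w (take j h)"
      unfolding Vi_def using geo_take gg gh w C_def by auto
    have VB1: "Vi (drop i g) t k"
      unfolding Vi_def using geo_drop gg k tG tC by auto
    have VB2: "Wi w (drop j h) k"
      unfolding Wi_def using geo_drop gh k w ek2 C_def by auto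
    have li: "length (take i g) = i" "length (drop i g) = G - i" using a(1) unfolding G_def by auto
    have lj: "length (take j h) = j" "length (drop j h) = H - j" using j unfolding H_def by auto
    have ar1: "ar R0 (take i g @ w) (take j h) (bnd (i + j))"
      using IH[OF VA] li lj m j a(1) lg unfolding G_def H_def M0_def by (simp; linarith)
    have ar2: "ar R0 (drop i g @ t) k (bnd (G - i + length k))"
      using IH[OF VB1] li lj m j a(1) lg ji kl unfolding G_def H_def M0_def C_def by (simp; linarith)
    have ar3: "ar R0 (w @ drop j h) k (bnd (H - j + length k))"
      using IH'[OF VB2] li lj m j a(1) lg ji kl HGC unfolding G_def H_def M0_def C_def by (simp; linarith)
    have "ar R0 (take i g @ (drop i g @ t)) (take i g @ k) (bnd (G - i + length k))"
      using ar_ctxL[OF ar2] .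
    moreover have "ar R0 (take i g @ k) (take i g @ (w @ drop j h)) (bnd (H - j + length k))"
      using ar_ctxL[OF ar_sym[OF ar3]] .
    moreover have "ar R0 ((take i g @ w) @ drop j h) (take j h @ drop j h) (bnd (i + j))"
      using ar_ctxR[OF ar1] .
    ultimately have "ar R0 (g @ t) h (bnd (G - i + length k) + bnd (H - j + length k) + bnd (i + j))"
      by (metis (no_types, lifting) append.assoc append_take_drop_id ar_trans)
    moreover have "bnd (i + j) + bnd (G - i + length k) + bnd (H - j + length k) + 0 \<le> bnd m"
      by (rule combine) (use m j a(1) lg ji kl HGC G_def H_def M0_def C_def in \<open>(simp only: distrib_left) | linarith\<close>)+
    ultimately show ?thesis using ar_mono by (simp add: add.commute add.left_commute)
  qed
qed

lemma tail_chain: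
  assumes g: "g \<in> lists Gs" and t: "t \<in> lists Gs" "length t \<le> C"
    and ex: "\<And>i. i0 \<le> i \<Longrightarrow> i \<le> length g \<Longrightarrow> \<exists>W\<in>lists Gs. length W \<le> C + D \<and> ev (take i g) * ev W = ev g * ev t"
  shows "i0 \<le> i \<Longrightarrow> i \<le> length g \<Longrightarrow> W \<in> lists Gs \<Longrightarrow> length W \<le> C + D
    \<Longrightarrow> ev (take i g) * ev W = ev g * ev t \<Longrightarrow> ar R0 (drop i g @ t) W (length g - i + 1)"
proof (induction "length g - i" arbitrary: i W)
  case 0
  then have i: "i = length g" by simp
  then have "ev W = ev t" using 0 cancel by simp
  then have "ar R0 t W 1" using t 0 by (intro ar_R0) (auto simp: K_def C_def)
  then show ?case using i by simp
next
  case (Suc n)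
  then have il: "i < length g" by simp
  obtain W' where W': "W' \<in> lists Gs" "length W' \<le> C + D" "ev (take (Suc i) g) * ev W' = ev g * ev t"
    using ex[of "Suc i"] Suc.prems il by auto
  have ih: "ar R0 (drop (Suc i) g @ t) W' (length g - Suc i + 1)"
    using Suc.hyps(1)[of "Suc i" W'] Suc.hyps(2) Suc.prems W' il by simp
  have d: "drop i g = [g ! i] @ drop (Suc i) g" using il by (simp add: Cons_nth_drop_Suc)
  have gi: "g ! i \<in> Gs" using g il by (meson in_lists_conv_set nth_mem)
  have "ev (take i g) * ev ([g ! i] @ W') = ev (take i g) * ev W"
    using W'(3) Suc.prems(5) il by (simp add: take_Suc_conv_app_nth mult.assoc)
  then have "ev ([g ! i] @ W') = ev W" by (rule cancel)
  then have r: "ar R0 ([g ! i] @ W') W 1" using gi W' Suc.prems by (intro ar_R0) (auto simp: K_def C_def)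
  have "ar R0 (drop i g @ t) ([g ! i] @ W') (length g - Suc i + 1)"
    unfolding d using ar_ctxL[OF ih, of "[g ! i]"] by simp
  from ar_trans[OF this r] show ?case using il by (simp add: Suc_diff_Suc)
qed

lemma head_chain:
  assumes s: "s \<in> lists Gs" "length s \<le> C" and g: "g \<in> lists Gs" and k0: "k0 \<le> length g"
    and ex: "\<And>k. k \<le> k0 \<Longrightarrow> \<exists>S\<in>lists Gs. length S \<le> C + D \<and> ev S = ev s * ev (take k g)"
  shows "k \<le> k0 \<Longrightarrow> S \<in> lists Gs \<Longrightarrow> length S \<le> C + D \<Longrightarrow> ev S = ev s * ev (take k g)
    \<Longrightarrow> ar R0 (s @ take k g) S (k + 1)"
proof (induction k arbitrary: S)
  case 0
  have "ar R0 s S 1" using s 0 by (intro ar_R0) (auto simp: K_def C_def)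
  then show ?case by simp
next
  case (Suc k)
  then have kl: "k < length g" using k0 by simp
  obtain S' where S': "S' \<in> lists Gs" "length S' \<le> C + D" "ev S' = ev s * ev (take k g)"
    using ex[of k] Suc.prems by auto
  have ih: "ar R0 (s @ take k g) S' (k + 1)" using Suc.IH S' Suc.prems by simp
  have gk: "g ! k \<in> Gs" using g kl by (meson in_lists_conv_set nth_mem)
  have tk: "take (Suc k) g = take k g @ [g ! k]" using kl by (simp add: take_Suc_conv_app_nth)
  have "ev (S' @ [g ! k]) = ev S" using S'(3) Suc.prems(4) tk by (simp add: mult.assoc)
  then have r: "ar R0 (S' @ [g ! k]) S 1" using gk S' Suc.prems by (intro ar_R0) (auto simp: K_def C_def)
  have "ar R0 (s @ take (Suc k) g) (S' @ [g ! k]) (k + 1)"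
    unfolding tk using ar_ctxR[OF ih, of "[g ! k]"] by simp
  from ar_trans[OF this r] show ?case by simp
qed

lemma V_small:
  assumes IH: "\<And>g t h. Vi g t h \<Longrightarrow> length g + length h < m \<Longrightarrow> ar R0 (g @ t) h (bnd (length g + length h))"
    and V: "Vi g t h" and m: "m = length g + length h" "M0 \<le> m" and lg: "3 * length h < 2 * length g"
  shows "ar R0 (g @ t) h (bnd m)"
proof -
  define G where "G = length g"
  define H where "H = length h"
  have gg: "geo g" and gh: "geo h" and tG: "t \<in> lists Gs" and tC: "length t \<le> C" and e: "ev g * ev t = ev h"
    using V unfolding Vi_def by auto
  obtain t' where t': "geo t'" "ev t' = ev t" using geo_exists by blast
  have t'C: "length t' \<le> C" using geo_le[OF t'(1) tG] t'(2) tC by simp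
  have e': "ev g * ev t' = ev h" using e t' by simp
  define i0 where "i0 = H + D + 1"
  have i0G: "i0 \<le> G" using m lg unfolding i0_def G_def H_def M0_def by linarith
  have link: "\<exists>k w. k \<le> length t' \<and> w \<in> lists Gs \<and> length w \<le> D \<and> ev (take i g) * ev w = ev g * ev (take k t')"
    if i: "i0 \<le> i" "i \<le> G" for i
  proof -
    from thin_words(2)[OF gg t'(1) gh e', of i] i G_def
    consider (a) j where "j \<le> length h" "reach (ev (take j h)) (ev (take i g))"
      | (b) k where "k \<le> length t'" "reach (ev (take i g)) (ev g * ev (take k t'))" by auto
    then show ?thesis
    proof cases
      case a
      then obtain w where w: "w \<in> lists Gs" "length w \<le> D" "ev (take j h) * ev w = ev (take i g)"
        unfolding reach_def by blast
      have "take j h \<in> lists Gs" using geo_lists[OF gh] by (meson in_lists_conv_set in_set_takeD)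
      then have "length (take i g) \<le> length (take j h @ w)"
        using geo_le[OF geo_take[OF gg, of i], of "take j h @ w"] w by simp
      then have "i \<le> H + D" using w(2) i a(1) unfolding G_def H_def by simp
      then show ?thesis using i unfolding i0_def by simp
    next
      case b then show ?thesis unfolding reach_def by blast
    qed
  qed
  have tailex: "\<exists>W\<in>lists Gs. length W \<le> C + D \<and> ev (take i g) * ev W = ev g * ev t"
    if ii: "i0 \<le> i" "i \<le> length g" for i
  proof -
    obtain k w where kw: "k \<le> length t'" "w \<in> lists Gs" "length w \<le> D" "ev (take i g) * ev w = ev g * ev (take k t')"
      using link[OF ii(1)] ii(2) unfolding G_def by blast
    have "drop k t' \<in> lists Gs" using geo_lists[OF t'(1)] by (meson in_lists_conv_set in_set_dropD)
    moreover have "ev (take i g) * ev (w @ drop k t') = ev g * ev t"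
      using kw(4) ev_take_drop[of k t'] t'(2) by (simp add: mult.assoc[symmetric]) (metis mult.assoc)
    ultimately show ?thesis using kw t'C by (intro bexI[of _ "w @ drop k t'"]) auto
  qed
  obtain k w where kw: "k \<le> length t'" "w \<in> lists Gs" "length w \<le> D" "ev (take i0 g) * ev w = ev g * ev (take k t')"
    using link[OF order_refl i0G] by blast
  have dk: "drop k t' \<in> lists Gs" using geo_lists[OF t'(1)] by (meson in_lists_conv_set in_set_dropD)
  have eW: "ev (take i0 g) * ev (w @ drop k t') = ev g * ev t"
    using kw(4) ev_take_drop[of k t'] t'(2) by (simp add: mult.assoc[symmetric]) (metis mult.assoc)
  have tail: "ar R0 (drop i0 g @ t) (w @ drop k t') (G - i0 + 1)"
    using tail_chain[OF geo_lists[OF gg] tG tC tailex, where i=i0 and W="w @ drop k t'"] i0G dk kw t'C eW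
    unfolding G_def by simp
  obtain kk where kk: "geo kk" "ev kk = ev (take i0 g @ w)" using geo_exists by blast
  have tig: "take i0 g \<in> lists Gs" using geo_lists[OF gg] by (meson in_lists_conv_set in_set_takeD)
  have kkl: "length kk \<le> i0 + D" using geo_le[OF kk(1), of "take i0 g @ w"] kk tig kw i0G G_def by simp
  have V1: "Vi (take i0 g) w kk" unfolding Vi_def using geo_take gg kk kw C_def by auto
  have ekk: "ev kk * ev (drop k t') = ev h"
    using kk(2) kw(4) ev_take_drop[of k t'] e' by (simp add: mult.assoc)
  have V2: "Vi kk (drop k t') h" unfolding Vi_def using kk gh dk t'C ekk by auto
  have li: "length (take i0 g) = i0" using i0G G_def by simp
  have ar1: "ar R0 (take i0 g @ w) kk (bnd (i0 + length kk))"
    using IH[OF V1] li kkl m lg unfolding G_def H_def i0_def M0_def by (simp; linarith)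
  have ar2: "ar R0 (kk @ drop k t') h (bnd (length kk + H))"
    using IH[OF V2] kkl m lg unfolding G_def H_def i0_def M0_def by (simp; linarith)
  have "ar R0 (take i0 g @ (drop i0 g @ t)) (take i0 g @ (w @ drop k t')) (G - i0 + 1)"
    using ar_ctxL[OF tail] .
  then have c1: "ar R0 (g @ t) ((take i0 g @ w) @ drop k t') (G - i0 + 1)"
    by (metis append.assoc append_take_drop_id)
  have c2: "ar R0 ((take i0 g @ w) @ drop k t') (kk @ drop k t') (bnd (i0 + length kk))"
    using ar_ctxR[OF ar1] .
  have "ar R0 (g @ t) h (G - i0 + 1 + bnd (i0 + length kk) + bnd (length kk + H))"
    using ar_trans[OF ar_trans[OF c1 c2] ar2] .
  moreover have "bnd (i0 + length kk) + bnd (length kk + H) + bnd 0 + (G - i0 + 1) \<le> bnd m"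

    by (rule combine) (use m lg kkl i0G G_def H_def M0_def C_def i0_def in \<open>(simp only: distrib_left) | linarith\<close>)+
  ultimately show ?thesis using ar_mono by (simp add: add.commute add.left_commute)
qed

lemma W_large:
  assumes IH: "\<And>g t h. Vi g t h \<Longrightarrow> length g + length h < m \<Longrightarrow> ar R0 (g @ t) h (bnd (length g + length h))"
    and IH': "\<And>s g h. Wi s g h \<Longrightarrow> length g + length h < m \<Longrightarrow> ar R0 (s @ g) h (bnd (length g + length h))"
    and W: "Wi s g h" and m: "m = length g + length h" "M0 \<le> m" and lg: "2 * length g \<le> 3 * length h"
  shows "ar R0 (s @ g) h (bnd m)"
proof -
  define G where "G = length g"
  define H where "H = length h"
  have gg: "geo g" and gh: "geo h" and sG: "s \<in> lists Gs" and sC: "length s \<le> C" and e: "ev s * ev g = ev h"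
    using W unfolding Wi_def by auto
  obtain s' where s': "geo s'" "ev s' = ev s" using geo_exists by blast
  have s'C: "length s' \<le> C" using geo_le[OF s'(1) sG] s'(2) sC by simp
  have HGC: "H \<le> C + G" using geo_le[OF gh, of "s @ g"] geo_lists[OF gg] sG e sC unfolding G_def H_def by simp
  define j where "j = H div 2"
  have j: "2 * j \<le> H" "H \<le> 2 * j + 1" unfolding j_def by auto
  have e': "ev s' * ev g = ev h" using e s' by simp
  have jh: "j \<le> length h" using j H_def by simp
  from thin_words(1)[OF s'(1) gg gh e' jh]
  consider (a) i where "i \<le> length s'" "reach (ev (take i s')) (ev (take j h))"
    | (b) k where "k \<le> G" "reach (ev (take j h)) (ev s' * ev (take k g))"
    unfolding G_def by blast
  then show ?thesis
  proof cases
    case a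
    then obtain w where w: "w \<in> lists Gs" "length w \<le> D" "ev (take i s') * ev w = ev (take j h)"
      unfolding reach_def by blast
    have "take i s' \<in> lists Gs" using geo_lists[OF s'(1)] by (meson in_lists_conv_set in_set_takeD)
    then have "length (take j h) \<le> length (take i s' @ w)"
      using geo_le[OF geo_take[OF gh, of j], of "take i s' @ w"] w by simp
    then have "j \<le> C + D" using w(2) s'C jh by simp
    then have False using j m lg unfolding G_def H_def M0_def C_def by linarith
    then show ?thesis by blast
  next
    case b
    then obtain w where w: "w \<in> lists Gs" "length w \<le> D" "ev (take j h) * ev w = ev s' * ev (take k g)"
      unfolding reach_def by blast
    have tjh: "take j h \<in> lists Gs" using geo_lists[OF gh] by (meson in_lists_conv_set in_set_takeD)
    have dkg: "drop k g \<in> lists Gs" using geo_lists[OF gg] by (meson in_lists_conv_set in_set_dropD)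
    have "ev (take j h @ w @ drop k g) = ev h"
      using w(3) e' ev_take_drop[of k g] by (simp add: mult.assoc[symmetric]) (metis mult.assoc)
    then have "H \<le> length (take j h @ w @ drop k g)"
      using geo_le[OF gh, of "take j h @ w @ drop k g"] tjh w(1) dkg unfolding H_def by simp
    then have hk: "H + k \<le> G + j + D" using w(2) jh b(1) unfolding G_def H_def by simp
    obtain kk where kk: "geo kk" "ev kk = ev (s @ take k g)" using geo_exists by blast
    have ekk: "ev (take j h) * ev w = ev kk" using w(3) kk(2) s'(2) by simp
    have kkl: "length kk \<le> j + D" using geo_le[OF kk(1), of "take j h @ w"] ekk tjh w jh by simp
    have eB: "ev w * ev (drop k g) = ev (drop j h)"
    proof (rule cancel[of "take j h"])
      show "ev (take j h) * (ev w * ev (drop k g)) = ev (take j h) * ev (drop j h)"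
        using w(3) e' ev_take_drop[of k g] ev_take_drop[of j h] by (simp add: mult.assoc[symmetric]) (metis mult.assoc)
    qed
    have VA2: "Wi s (take k g) kk" unfolding Wi_def using geo_take gg kk sG sC by auto
    have VA1: "Vi (take j h) w kk" unfolding Vi_def using geo_take gh kk w ekk C_def by auto
    have VB: "Wi w (drop k g) (drop j h)" unfolding Wi_def using geo_drop gg gh w eB C_def by auto
    have lk: "length (take k g) = k" "length (drop k g) = G - k" using b(1) unfolding G_def by auto
    have lj: "length (take j h) = j" "length (drop j h) = H - j" using j unfolding H_def by auto
    have ar1: "ar R0 (s @ take k g) kk (bnd (k + length kk))"
      using IH'[OF VA2] lk kkl hk m j lg unfolding G_def H_def M0_def by (simp; linarith)
    have ar2: "ar R0 (take j h @ w) kk (bnd (j + length kk))"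
      using IH[OF VA1] lj kkl m j lg HGC unfolding G_def H_def M0_def C_def by (simp; linarith)
    have ar3: "ar R0 (w @ drop k g) (drop j h) (bnd (G - k + (H - j)))"
      using IH'[OF VB] lk lj m j lg unfolding G_def H_def M0_def by (simp; linarith)
    have c1: "ar R0 (s @ g) (kk @ drop k g) (bnd (k + length kk))"
      using ar_ctxR[OF ar1, of "drop k g"] by (metis append.assoc append_take_drop_id)
    have c2: "ar R0 (kk @ drop k g) (take j h @ (w @ drop k g)) (bnd (j + length kk))"
      using ar_ctxR[OF ar_sym[OF ar2], of "drop k g"] by simp
    have c3: "ar R0 (take j h @ (w @ drop k g)) h (bnd (G - k + (H - j)))"
      using ar_ctxL[OF ar3, of "take j h"] by simp
    have "ar R0 (s @ g) h (bnd (k + length kk) + bnd (j + length kk) + bnd (G - k + (H - j)))"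
      using ar_trans[OF ar_trans[OF c1 c2] c3] .
    moreover have "bnd (k + length kk) + bnd (j + length kk) + bnd (G - k + (H - j)) + 0 \<le> bnd m"
      by (rule combine) (use m j b(1) lg hk kkl HGC G_def H_def M0_def C_def in \<open>(simp only: distrib_left) | linarith\<close>)+
    ultimately show ?thesis using ar_mono by simp
  qed
qed

lemma W_small:
  assumes IH': "\<And>s g h. Wi s g h \<Longrightarrow> length g + length h < m \<Longrightarrow> ar R0 (s @ g) h (bnd (length g + length h))"
    and W: "Wi s g h" and m: "m = length g + length h" "M0 \<le> m" and lg: "3 * length h < 2 * length g"
  shows "ar R0 (s @ g) h (bnd m)"
proof -
  define G where "G = length g"
  define H where "H = length h"
  have gg: "geo g" and gh: "geo h" and sG: "s \<in> lists Gs" and sC: "length s \<le> C" and e: "ev s * ev g = ev h"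
    using W unfolding Wi_def by auto
  obtain s' where s': "geo s'" "ev s' = ev s" using geo_exists by blast
  have s'C: "length s' \<le> C" using geo_le[OF s'(1) sG] s'(2) sC by simp
  have e': "ev s' * ev g = ev h" using e s' by simp
  define k0 where "k0 = G - (H + D + 1)"
  have k0G: "k0 + H + D + 1 = G" using m lg unfolding k0_def G_def H_def M0_def by linarith
  have link: "\<exists>i w. i \<le> length s' \<and> w \<in> lists Gs \<and> length w \<le> D \<and> ev (take i s') * ev w = ev s' * ev (take k g)"
    if kk: "k \<le> k0" for k
  proof -
    have kG: "k \<le> length g" using kk k0G G_def by simp
    from thin_words(3)[OF s'(1) gg gh e' kG]
    consider (a) i where "i \<le> length s'" "reach (ev (take i s')) (ev s' * ev (take k g))"
      | (b) j where "j \<le> length h" "reach (ev s' * ev (take k g)) (ev (take j h))" by blast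
    then show ?thesis
    proof cases
      case b
      then obtain w where w: "w \<in> lists Gs" "length w \<le> D" "ev s' * ev (take k g) * ev w = ev (take j h)"
        unfolding reach_def by blast
      have "ev (w @ drop j h) = ev (drop k g)"
      proof (rule cancel[of "s' @ take k g"])
        show "ev (s' @ take k g) * ev (w @ drop j h) = ev (s' @ take k g) * ev (drop k g)"
          using w(3) e' ev_take_drop[of k g] ev_take_drop[of j h] by (simp add: mult.assoc[symmetric]) (metis mult.assoc)
      qed
      moreover have "drop j h \<in> lists Gs" using geo_lists[OF gh] by (meson in_lists_conv_set in_set_dropD)
      ultimately have "length (drop k g) \<le> length (w @ drop j h)"
        using geo_le[OF geo_drop[OF gg, of k], of "w @ drop j h"] w by simp
      then have "G - k \<le> D + H" using w(2) unfolding G_def H_def by simp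
      then show ?thesis using kk k0G by linarith
    next
      case a then show ?thesis unfolding reach_def by blast
    qed
  qed
  have headex: "\<exists>S\<in>lists Gs. length S \<le> C + D \<and> ev S = ev s * ev (take k g)"
    if kk: "k \<le> k0" for k
  proof -
    obtain i w where iw: "i \<le> length s'" "w \<in> lists Gs" "length w \<le> D" "ev (take i s') * ev w = ev s' * ev (take k g)"
      using link[OF kk] by blast
    have "take i s' \<in> lists Gs" using geo_lists[OF s'(1)] by (meson in_lists_conv_set in_set_takeD)
    then show ?thesis using iw s'C s'(2) by (intro bexI[of _ "take i s' @ w"]) auto
  qed
  obtain i w where iw: "i \<le> length s'" "w \<in> lists Gs" "length w \<le> D" "ev (take i s') * ev w = ev s' * ev (take k0 g)"
    using link[OF order_refl] by blast
  have tis: "take i s' \<in> lists Gs" using geo_lists[OF s'(1)] by (meson in_lists_conv_set in_set_takeD)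
  have head: "ar R0 (s @ take k0 g) (take i s' @ w) (k0 + 1)"
  proof (rule head_chain[of s g k0])
    show "k0 \<le> length g" using k0G G_def by simp
    show "ev (take i s' @ w) = ev s * ev (take k0 g)" using iw s'(2) by simp
    show "length (take i s' @ w) \<le> C + D" using iw s'C by simp
  qed (use sG sC geo_lists[OF gg] headex tis iw in auto)
  have dkg: "drop k0 g \<in> lists Gs" using geo_lists[OF gg] by (meson in_lists_conv_set in_set_dropD)
  obtain kk where kk: "geo kk" "ev kk = ev (w @ drop k0 g)" using geo_exists by blast
  have kkl: "length kk \<le> D + (G - k0)" using geo_le[OF kk(1), of "w @ drop k0 g"] kk dkg iw G_def by simp
  have V1: "Wi w (drop k0 g) kk" unfolding Wi_def using geo_drop gg kk iw C_def by auto
  have ekk: "ev (take i s') * ev kk = ev h"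
    using kk(2) iw(4) ev_take_drop[of k0 g] e' by (simp add: mult.assoc[symmetric]) (metis mult.assoc)
  have tsC: "length (take i s') \<le> C" using s'C by simp
  have V2: "Wi (take i s') kk h" unfolding Wi_def using kk gh tis tsC ekk by auto
  have lk: "length (drop k0 g) = G - k0" using G_def by simp
  have ar1: "ar R0 (w @ drop k0 g) kk (bnd (G - k0 + length kk))"
    using IH'[OF V1] lk kkl m lg k0G unfolding G_def H_def M0_def by (simp; linarith)
  have ar2: "ar R0 (take i s' @ kk) h (bnd (length kk + H))"
    using IH'[OF V2] kkl m lg k0G unfolding G_def H_def M0_def by (simp; linarith)
  have c1: "ar R0 (s @ g) (take i s' @ (w @ drop k0 g)) (k0 + 1)"
    using ar_ctxR[OF head, of "drop k0 g"] by (metis append.assoc append_take_drop_id)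
  have c2: "ar R0 (take i s' @ (w @ drop k0 g)) (take i s' @ kk) (bnd (G - k0 + length kk))"
    using ar_ctxL[OF ar1] .
  have "ar R0 (s @ g) h (k0 + 1 + bnd (G - k0 + length kk) + bnd (length kk + H))"
    using ar_trans[OF ar_trans[OF c1 c2] ar2] .
  moreover have "bnd (G - k0 + length kk) + bnd (length kk + H) + bnd 0 + (k0 + 1) \<le> bnd m"
    by (rule combine) (use m lg kkl k0G G_def H_def M0_def C_def in \<open>(simp only: distrib_left) | linarith\<close>)+
  ultimately show ?thesis using ar_mono by (simp add: add.commute add.left_commute)
qed

lemma core_m:
  "\<forall>(g::nat list) t h s. length g + length h = m \<longrightarrow>
     (Vi g t h \<longrightarrow> ar R0 (g @ t) h (bnd m)) \<and> (Wi s g h \<longrightarrow> ar R0 (s @ g) h (bnd m))"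
proof (induction m rule: less_induct)
  case (less m)
  have IH: "\<And>g t h. Vi g t h \<Longrightarrow> length g + length h < m \<Longrightarrow> ar R0 (g @ t) h (bnd (length g + length h))"
    using less by blast
  have IH': "\<And>s g h. Wi s g h \<Longrightarrow> length g + length h < m \<Longrightarrow> ar R0 (s @ g) h (bnd (length g + length h))"
    using less by blast
  show ?case
  proof (intro allI impI conjI)
    fix g t h s :: "nat list" assume mm: "length g + length h = m"
    {
      assume V: "Vi g t h"
      show "ar R0 (g @ t) h (bnd m)"
      proof (cases "m < M0")
        case True then show ?thesis using base_V[OF V] mm by simp
      next
        case False
        show ?thesis
        proof (cases "2 * length g \<le> 3 * length h")
          case True then show ?thesis using V_large[OF IH IH' V mm[symmetric]] False by simp
        next
          case f2: False then show ?thesis using V_small[OF IH V mm[symmetric]] False by simp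
        qed
      qed
    }
    {
      assume W: "Wi s g h"
      show "ar R0 (s @ g) h (bnd m)"
      proof (cases "m < M0")
        case True then show ?thesis using base_W[OF W] mm by simp
      next
        case False
        show ?thesis
        proof (cases "2 * length g \<le> 3 * length h")
          case True then show ?thesis using W_large[OF IH IH' W mm[symmetric]] False by simp
        next
          case f2: False then show ?thesis using W_small[OF IH' W mm[symmetric]] False by simp
        qed
      qed
    }
  qed
qed

lemma coreV: "Vi g t h \<Longrightarrow> ar R0 (g @ t) h (bnd (length g + length h))"
  using core_m by blast

lemma bnd_mono: "a \<le> b \<Longrightarrow> bnd a \<le> bnd b"
  unfolding bnd_def by (simp add: power_mono)

lemma word_to_geo: "u \<in> lists Gs \<Longrightarrow> \<exists>h. geo h \<and> ev h = ev u \<and> ar R0 u h (length u * bnd (2 * length u))"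
proof (induction u rule: rev_induct)
  case Nil then show ?case using geo_Nil ar_refl by fastforce
next
  case (snoc a u)
  then have uG: "u \<in> lists Gs" and aG: "a \<in> Gs" by auto
  obtain h' where h': "geo h'" "ev h' = ev u" "ar R0 u h' (length u * bnd (2 * length u))"
    using snoc.IH[OF uG] by blast
  obtain h where h: "geo h" "ev h = ev (u @ [a])" using geo_exists by blast
  have V: "Vi h' [a] h" unfolding Vi_def using h' h aG C_def by auto
  have l1: "length h' \<le> length u" using geo_le[OF h'(1) uG] h'(2) by simp
  have l2: "length h \<le> length (u @ [a])" using geo_le[OF h(1), of "u @ [a]"] snoc.prems h(2) by simp
  have a1: "ar R0 (u @ [a]) (h' @ [a]) (length u * bnd (2 * length u))" using ar_ctxR[OF h'(3)] .
  have a2: "ar R0 (h' @ [a]) h (bnd (2 * length (u @ [a])))"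
  proof -
    have "length h' + length h \<le> 2 * length (u @ [a])" using l1 l2 by simp
    then show ?thesis using ar_mono[OF coreV[OF V]] bnd_mono by blast
  qed
  have "length u * bnd (2 * length u) \<le> length u * bnd (2 * length (u @ [a]))"
    using bnd_mono by simp
  then have "length u * bnd (2 * length u) + bnd (2 * length (u @ [a])) \<le> length (u @ [a]) * bnd (2 * length (u @ [a]))"
    by simp
  then show ?case using ar_trans[OF a1 a2] h ar_mono by blast
qed


lemma area_bound:
  assumes "u \<in> lists Gs" "v \<in> lists Gs" "ev u = ev v"
  shows "ar R0 u v (PB (length u + length v))"
proof -
  obtain hu where hu: "geo hu" "ev hu = ev u" "ar R0 u hu (length u * bnd (2 * length u))"
    using word_to_geo assms(1) by blast
  obtain hv where hv: "geo hv" "ev hv = ev v" "ar R0 v hv (length v * bnd (2 * length v))"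
    using word_to_geo assms(2) by blast
  have V: "Vi hu [] hv" unfolding Vi_def using hu hv assms by auto
  have l1: "length hu \<le> length u" using geo_le[OF hu(1) assms(1)] hu(2) by simp
  have l2: "length hv \<le> length v" using geo_le[OF hv(1) assms(2)] hv(2) by simp
  define n where "n = length u + length v"
  have "bnd (2 * length u) \<le> bnd (2 * n)" "bnd (2 * length v) \<le> bnd (2 * n)"
    "bnd (length hu + length hv) \<le> bnd (2 * n)"
    using l1 l2 by (auto intro!: bnd_mono simp: n_def)
  then have "length u * bnd (2 * length u) \<le> length u * bnd (2 * n)"
    "length v * bnd (2 * length v) \<le> length v * bnd (2 * n)" by simp_all
  then have b1: "ar R0 u hu (length u * bnd (2 * n))" and b3: "ar R0 v hv (length v * bnd (2 * n))"
    and b2: "ar R0 hu hv (bnd (2 * n))"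
    using hu(3) hv(3) ar_mono coreV[OF V] \<open>bnd (length hu + length hv) \<le> bnd (2 * n)\<close> by auto
  have "ar R0 u v (length u * bnd (2 * n) + bnd (2 * n) + length v * bnd (2 * n))"
    using ar_trans[OF ar_trans[OF b1 b2] ar_sym[OF b3]] .
  moreover have "length u * bnd (2 * n) + bnd (2 * n) + length v * bnd (2 * n) = PB n"
    unfolding PB_def n_def by (simp add: algebra_simps)
  ultimately show ?thesis using n_def by simp
qed

end



lemma eval_append[simp]: "eval_word \<phi> (u @ v) = eval_word \<phi> u * eval_word \<phi> v"
  unfolding eval_word_def by simp

lemma eval_Nil_Cons[simp]: "eval_word \<phi> [] = 1" "eval_word \<phi> (a # u) = \<phi> a * eval_word \<phi> u"
  unfolding eval_word_def by auto

lemma rstep_eval: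
  assumes "\<And>l r. (l, r) \<in> R \<Longrightarrow> eval_word \<phi> l = eval_word \<phi> r"
  shows "(u, v) \<in> (rstep R)\<^sup>* \<Longrightarrow> eval_word \<phi> u = eval_word \<phi> v"
proof (induction rule: rtrancl_induct)
  case base then show ?case by simp
next
  case (step y z)
  then obtain x w l r where "y = x @ l @ w" "z = x @ r @ w" "(l, r) \<in> R \<or> (r, l) \<in> R"
    unfolding rstep_def by blast
  then have "eval_word \<phi> y = eval_word \<phi> z" using assms by auto
  then show ?case using step by simp
qed

lemma pres_R_eval:
  assumes "is_presentation G R \<phi>" "(l, r) \<in> R" shows "eval_word \<phi> l = eval_word \<phi> r"
proof -
  have lr: "l \<in> lists G" "r \<in> lists G" using assms unfolding is_presentation_def by auto
  have "(l, r) \<in> rstep R" unfolding rstep_def using assms(2)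
    by (intro CollectI exI[of _ "[]"] exI[of _ "[]"] exI[of _ l] exI[of _ r]) auto
  then show ?thesis using assms(1) lr unfolding is_presentation_def by blast
qed

definition cmap :: "(nat \<Rightarrow> nat list) \<Rightarrow> nat list \<Rightarrow> nat list" where
  "cmap f u = concat (map f u)"

lemma cmap_simps[simp]: "cmap f [] = []" "cmap f (a # u) = f a @ cmap f u" "cmap f (u @ v) = cmap f u @ cmap f v"
  unfolding cmap_def by auto

lemma transfer:
  fixes \<phi>0 \<phi>' :: "nat \<Rightarrow> 'm::monoid_mult"
  assumes P0: "finite_presentation G0 R0 \<phi>0"
    and bound: "\<And>u v. u \<in> lists G0 \<Longrightarrow> v \<in> lists G0 \<Longrightarrow> eval_word \<phi>0 u = eval_word \<phi>0 v
        \<Longrightarrow> ar R0 u v (B (length u + length v))"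
    and Bmono: "\<And>a b. a \<le> b \<Longrightarrow> B a \<le> B b"
    and P': "finite_presentation G' R' \<phi>'"
  shows "\<exists>c1 c2 L. \<forall>u v. u \<in> lists G' \<longrightarrow> v \<in> lists G' \<longrightarrow> eval_word \<phi>' u = eval_word \<phi>' v
     \<longrightarrow> ar R' u v (c1 * (length u + length v) + c2 * B (L * (length u + length v)))"
proof -
  have fG0: "finite G0" "finite R0" "is_presentation G0 R0 \<phi>0" using P0 unfolding finite_presentation_def by auto
  have fG': "finite G'" "finite R'" "is_presentation G' R' \<phi>'" using P' unfolding finite_presentation_def by auto
  have surj0: "\<forall>m. \<exists>w\<in>lists G0. eval_word \<phi>0 w = m" using fG0(3) unfolding is_presentation_def by blast
  have surj': "\<forall>m. \<exists>w\<in>lists G'. eval_word \<phi>' w = m" using fG'(3) unfolding is_presentation_def by blast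
  have eq': "\<And>u v. u \<in> lists G' \<Longrightarrow> v \<in> lists G' \<Longrightarrow> eval_word \<phi>' u = eval_word \<phi>' v \<Longrightarrow> (u, v) \<in> (rstep R')\<^sup>*"
    using fG'(3) unfolding is_presentation_def by blast
  define \<sigma> where "\<sigma> b = (SOME w. w \<in> lists G0 \<and> eval_word \<phi>0 w = \<phi>' b)" for b
  define \<tau> where "\<tau> a = (SOME w. w \<in> lists G' \<and> eval_word \<phi>' w = \<phi>0 a)" for a
  have \<sigma>: "\<sigma> b \<in> lists G0 \<and> eval_word \<phi>0 (\<sigma> b) = \<phi>' b" for b
    unfolding \<sigma>_def by (rule someI_ex) (use surj0 in blast)
  have \<tau>: "\<tau> a \<in> lists G' \<and> eval_word \<phi>' (\<tau> a) = \<phi>0 a" for a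
    unfolding \<tau>_def by (rule someI_ex) (use surj' in blast)
  have sig_ev: "eval_word \<phi>0 (cmap \<sigma> u) = eval_word \<phi>' u" for u
    by (induction u) (auto simp: \<sigma>)
  have tau_ev: "eval_word \<phi>' (cmap \<tau> u) = eval_word \<phi>0 u" for u
    by (induction u) (auto simp: \<tau>)
  have sig_l: "cmap \<sigma> u \<in> lists G0" for u by (induction u) (auto simp: \<sigma>)
  have tau_l: "cmap \<tau> u \<in> lists G'" for u by (induction u) (use \<tau> in auto)
  define L where "L = (\<Sum>b\<in>G'. length (\<sigma> b))"
  have sig_len: "u \<in> lists G' \<Longrightarrow> length (cmap \<sigma> u) \<le> L * length u" for u
  proof (induction u)
    case Nil then show ?case by simp
  next
    case (Cons b u)
    have "length (\<sigma> b) \<le> L" unfolding L_def using Cons.prems fG'(1) by (intro member_le_sum) auto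
    then show ?case using Cons by simp
  qed
  define nb where "nb b = (LEAST n. ar R' [b] (cmap \<tau> (\<sigma> b)) n)" for b
  have nb: "b \<in> G' \<Longrightarrow> ar R' [b] (cmap \<tau> (\<sigma> b)) (nb b)" for b
  proof -
    assume b: "b \<in> G'"
    have "eval_word \<phi>' [b] = eval_word \<phi>' (cmap \<tau> (\<sigma> b))" using tau_ev \<sigma> by simp
    then have "([b], cmap \<tau> (\<sigma> b)) \<in> (rstep R')\<^sup>*" using eq' b tau_l by auto
    then obtain n where "ar R' [b] (cmap \<tau> (\<sigma> b)) n" using rtrancl_ar by blast
    then show ?thesis unfolding nb_def by (rule LeastI)
  qed
  define N1 where "N1 = (\<Sum>b\<in>G'. nb b)"
  have N1: "b \<in> G' \<Longrightarrow> nb b \<le> N1" for b unfolding N1_def using fG'(1) by (intro member_le_sum) auto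
  have round: "u \<in> lists G' \<Longrightarrow> ar R' u (cmap \<tau> (cmap \<sigma> u)) (N1 * length u)" for u
  proof (induction u)
    case Nil then show ?case by (simp add: ar_refl)
  next
    case (Cons b u)
    have bG: "b \<in> G'" using Cons.prems by simp
    have a1: "ar R' ([b] @ u) (cmap \<tau> (\<sigma> b) @ u) N1" using ar_mono[OF ar_ctxR[OF nb[OF bG]] N1[OF bG]] .
    have a2: "ar R' (cmap \<tau> (\<sigma> b) @ u) (cmap \<tau> (\<sigma> b) @ cmap \<tau> (cmap \<sigma> u)) (N1 * length u)"
      using ar_ctxL Cons by auto
    show ?case using ar_trans[OF a1 a2] by simp
  qed
  define nr where "nr p = (LEAST n. ar R' (cmap \<tau> (fst p)) (cmap \<tau> (snd p)) n)" for p
  have nr: "(l, r) \<in> R0 \<Longrightarrow> ar R' (cmap \<tau> l) (cmap \<tau> r) (nr (l, r))" for l r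
  proof -
    assume lr: "(l, r) \<in> R0"
    have "eval_word \<phi>' (cmap \<tau> l) = eval_word \<phi>' (cmap \<tau> r)" using tau_ev pres_R_eval[OF fG0(3) lr] by simp
    then have "(cmap \<tau> l, cmap \<tau> r) \<in> (rstep R')\<^sup>*" using eq' tau_l by auto
    then obtain n where "ar R' (cmap \<tau> l) (cmap \<tau> r) n" using rtrancl_ar by blast
    then show ?thesis unfolding nr_def by (simp add: LeastI)
  qed
  define N2 where "N2 = (\<Sum>p\<in>R0. nr p)"
  have N2: "p \<in> R0 \<Longrightarrow> nr p \<le> N2" for p unfolding N2_def using fG0(2) by (intro member_le_sum) auto
  have step: "(x, y) \<in> rstep R0 \<Longrightarrow> ar R' (cmap \<tau> x) (cmap \<tau> y) N2" for x y
  proof -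
    assume "(x, y) \<in> rstep R0"
    then obtain a c l r where xy: "x = a @ l @ c" "y = a @ r @ c" "(l, r) \<in> R0 \<or> (r, l) \<in> R0"
      unfolding rstep_def by blast
    have "ar R' (cmap \<tau> l) (cmap \<tau> r) N2"
      using xy(3) nr N2 ar_mono ar_sym by blast
    then show ?thesis using xy ar_ctx by simp
  qed
  have steps: "(x, y) \<in> rstep R0 ^^ k \<Longrightarrow> ar R' (cmap \<tau> x) (cmap \<tau> y) (N2 * k)" for x y k
  proof (induction k arbitrary: y)
    case 0 then show ?case by (simp add: ar_refl)
  next
    case (Suc k)
    then obtain z where "(x, z) \<in> rstep R0 ^^ k" "(z, y) \<in> rstep R0" by auto
    then show ?case using Suc.IH step ar_trans by (metis mult_Suc_right add.commute)
  qed
  have main: "ar R' u v (N1 * (length u + length v) + N2 * B (L * (length u + length v)))"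
    if uv: "u \<in> lists G'" "v \<in> lists G'" "eval_word \<phi>' u = eval_word \<phi>' v" for u v
  proof -
    have "ar R0 (cmap \<sigma> u) (cmap \<sigma> v) (B (length (cmap \<sigma> u) + length (cmap \<sigma> v)))"
      using bound sig_l sig_ev uv by simp
    then obtain k where k: "k \<le> B (length (cmap \<sigma> u) + length (cmap \<sigma> v))"
      "(cmap \<sigma> u, cmap \<sigma> v) \<in> rstep R0 ^^ k" unfolding ar_def by blast
    have "length (cmap \<sigma> u) + length (cmap \<sigma> v) \<le> L * (length u + length v)"
      using sig_len uv by (simp add: add_mult_distrib2 add_mono)
    then have kB: "k \<le> B (L * (length u + length v))" using k(1) Bmono order_trans by blast
    have m: "ar R' (cmap \<tau> (cmap \<sigma> u)) (cmap \<tau> (cmap \<sigma> v)) (N2 * B (L * (length u + length v)))"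
      using steps[OF k(2)] ar_mono kB by simp
    have "ar R' u v (N1 * length u + N2 * B (L * (length u + length v)) + N1 * length v)"
      using ar_trans[OF ar_trans[OF round[OF uv(1)] m] ar_sym[OF round[OF uv(2)]]] .
    then show ?thesis by (simp add: algebra_simps)
  qed
  show ?thesis using main by blast
qed




lemma PB_mono: "a \<le> b \<Longrightarrow> PB a \<le> PB b"
  unfolding PB_def bnd_def by (intro mult_le_mono) (auto intro: power_mono)

context hyp begin

lemma R0_finite: "finite R0"
proof -
  have "R0 \<subseteq> {w. set w \<subseteq> Gs \<and> length w \<le> K} \<times> {w. set w \<subseteq> Gs \<and> length w \<le> K}"
    unfolding R0_def by auto
  moreover have "finite {w. set w \<subseteq> Gs \<and> length w \<le> K}" by (rule finite_lists_length_le) simp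
  ultimately show ?thesis by (meson finite_SigmaI finite_subset)
qed

lemma R0_eval: "(l, r) \<in> R0 \<Longrightarrow> eval_word \<phi> l = eval_word \<phi> r"
  unfolding R0_def ev_def by auto

lemma pres: "finite_presentation Gs R0 \<phi>"
  unfolding finite_presentation_def is_presentation_def
proof (intro conjI ballI allI)
  show "finite Gs" by simp
  show "finite R0" by (rule R0_finite)
  show "R0 \<subseteq> lists Gs \<times> lists Gs" unfolding R0_def by auto
  fix m show "\<exists>w\<in>lists Gs. eval_word \<phi> w = m" using word_exists unfolding ev_def by blast
next
  fix u v assume uv: "u \<in> lists Gs" "v \<in> lists Gs"
  show "(eval_word \<phi> u = eval_word \<phi> v) = ((u, v) \<in> (rstep R0)\<^sup>*)"
  proof
    assume "eval_word \<phi> u = eval_word \<phi> v"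
    then have "ar R0 u v (PB (length u + length v))" using area_bound uv unfolding ev_def by blast
    then show "(u, v) \<in> (rstep R0)\<^sup>*" by (rule ar_rtrancl)
  next
    assume "(u, v) \<in> (rstep R0)\<^sup>*"
    then show "eval_word \<phi> u = eval_word \<phi> v" using rstep_eval R0_eval by blast
  qed
qed

lemma bound0: "u \<in> lists Gs \<Longrightarrow> v \<in> lists Gs \<Longrightarrow> eval_word \<phi> u = eval_word \<phi> v
        \<Longrightarrow> ar R0 u v (PB (length u + length v))"
  using area_bound unfolding ev_def by blast

end

lemma dehn_zero: "dehn G R \<phi> 0 = 0"
proof -
  have "{area R u v | u v. u \<in> lists G \<and> v \<in> lists G \<and> eval_word \<phi> u = eval_word \<phi> v \<and> length u + length v \<le> 0} = {area R [] []}"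
    by auto
  moreover have "area R [] [] = 0" unfolding area_def by (rule Least_eq_0) simp
  ultimately show ?thesis unfolding dehn_def by simp
qed

lemma dehn_le:
  assumes "finite G"
    and b: "\<And>u v. u \<in> lists G \<Longrightarrow> v \<in> lists G \<Longrightarrow> eval_word \<phi> u = eval_word \<phi> v \<Longrightarrow> ar R u v (f (length u + length v))"
    and fm: "\<And>a b. a \<le> b \<Longrightarrow> f a \<le> f b"
  shows "dehn G R \<phi> n \<le> f n"
proof -
  define S where "S = {area R u v | u v. u \<in> lists G \<and> v \<in> lists G \<and> eval_word \<phi> u = eval_word \<phi> v \<and> length u + length v \<le> n}"
  define W where "W = {w. set w \<subseteq> G \<and> length w \<le> n}"
  have fW: "finite W" unfolding W_def using assms(1) by (rule finite_lists_length_le)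
  have "S \<subseteq> (\<lambda>p. area R (fst p) (snd p)) ` (W \<times> W)"
  proof
    fix x assume "x \<in> S"
    then obtain u v where "x = area R u v" "u \<in> lists G" "v \<in> lists G" "length u + length v \<le> n"
      unfolding S_def by blast
    then show "x \<in> (\<lambda>p. area R (fst p) (snd p)) ` (W \<times> W)"
      unfolding W_def by (intro image_eqI[of _ _ "(u, v)"]) auto
  qed
  then have fS: "finite S" using fW by (meson finite_SigmaI finite_imageI finite_subset)
  have ne: "S \<noteq> {}" unfolding S_def by (auto intro!: exI[of _ "[]"])
  have "\<forall>x\<in>S. x \<le> f n"
  proof
    fix x assume "x \<in> S"
    then obtain u v where uv: "x = area R u v" "u \<in> lists G" "v \<in> lists G" "eval_word \<phi> u = eval_word \<phi> v"
      "length u + length v \<le> n" unfolding S_def by blast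
    then have "area R u v \<le> f (length u + length v)" using b ar_area by blast
    then show "x \<le> f n" using uv fm order_trans by blast
  qed
  then show ?thesis unfolding dehn_def S_def[symmetric] using fS ne by simp
qed

lemma log_ge5: "5 \<le> log (4/3) (5::real)"
proof -
  have "(4/3::real) powr 5 = (4/3)^5" by (simp add: powr_realpow)
  also have "\<dots> \<le> 5" by (simp add: power_divide)
  finally show ?thesis by (subst le_log_iff) auto
qed

lemma final_power:
  fixes f :: "nat \<Rightarrow> nat" and c1 c3 :: nat
  assumes f0: "f 0 = 0" and fb: "\<And>j. j \<ge> 1 \<Longrightarrow> f j \<le> c1 * j + c3 * j ^ 6"
  shows "dehn_le_power f (log (4/3) 5 + 1)"
proof -
  define \<alpha> where "\<alpha> = log (4/3) 5 + (1::real)"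
  have a6: "6 \<le> \<alpha>" using log_ge5 unfolding \<alpha>_def by simp
  define a where "a = real (c1 + c3 + 1)"
  have a1: "1 \<le> a" unfolding a_def by simp
  have "real (f j) \<le> a * (a * real j) powr \<alpha> + a * real j" for j
  proof (cases "j = 0")
    case True then show ?thesis using f0 by simp
  next
    case False
    then have j1: "1 \<le> real j" by simp
    have "real (f j) \<le> real c1 * real j + real c3 * real j ^ 6"
      using fb[of j] False by (metis One_nat_def Suc_leI neq0_conv of_nat_add of_nat_le_iff of_nat_mult of_nat_power)
    also have "real c1 * real j \<le> a * real j" unfolding a_def using j1 by (intro mult_right_mono) auto
    also have "real c3 * real j ^ 6 \<le> a * (a * real j) powr \<alpha>"
    proof -
      have "real j ^ 6 = real j powr 6" using j1 by (simp add: powr_realpow)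
      also have "\<dots> \<le> (a * real j) powr 6" using a1 j1 by (intro powr_mono2) auto
      also have "\<dots> \<le> (a * real j) powr \<alpha>"
      proof (rule powr_mono[OF a6])
        show "1 \<le> a * real j" using mult_mono[OF a1 j1] a1 by simp
      qed
      finally have "real j ^ 6 \<le> (a * real j) powr \<alpha>" .
      moreover have "real c3 \<le> a" unfolding a_def by simp
      ultimately show ?thesis by (intro mult_mono) auto
    qed
    finally show ?thesis by (simp add: add.commute)
  qed
  then show ?thesis unfolding dehn_le_power_def \<alpha>_def[symmetric] using a1
    by (intro exI[of _ a]) auto
qed




lemma PB_poly:
  assumes "1 \<le> j" shows "PB (L * j) \<le> 30 * (2 * L + 1) ^ 6 * j ^ 6"
proof -
  have e1: "L * j + 1 \<le> (2 * L + 1) * j" using assms by (simp add: algebra_simps)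
  have e2: "2 * (L * j) + 1 \<le> (2 * L + 1) * j" using assms by (simp add: algebra_simps)
  have "(2 * (L * j) + 1) ^ 5 \<le> ((2 * L + 1) * j) ^ 5" using e2 by (rule power_mono) simp
  then have "(L * j + 1) * (2 * (L * j) + 1) ^ 5 \<le> ((2 * L + 1) * j) * ((2 * L + 1) * j) ^ 5"
    using e1 by (rule mult_le_mono[rotated])
  also have "\<dots> = ((2 * L + 1) * j) ^ 6"
  proof -
    have "x * x ^ 5 = x ^ 6" for x :: nat by (simp add: eval_nat_numeral)
    then show ?thesis by blast
  qed
  also have "\<dots> = (2 * L + 1) ^ 6 * j ^ 6" by (rule power_mult_distrib)
  finally show ?thesis unfolding PB_def bnd_def by simp
qed

theorem theorem5p6:
  fixes A :: "'m::monoid_mult set" and \<delta> :: real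
  assumes "left_cancellative TYPE('m)"
    and "\<delta> \<ge> 0" and "finite A" and "generates A"
    and "strongly_hyperbolic A \<delta>"
  shows "(\<exists>G R (\<phi> :: nat \<Rightarrow> 'm). finite_presentation G R \<phi>)
    \<and> (\<forall>G R (\<phi> :: nat \<Rightarrow> 'm). finite_presentation G R \<phi> \<longrightarrow>
          dehn_le_power (dehn G R \<phi>) (log (4/3) 5 + 1))"
proof -
  obtain xs where xs: "set xs = A" using finite_list assms(3) by blast
  define \<phi>0 where "\<phi>0 i = xs ! i" for i
  have img: "\<phi>0 ` {..<length xs} = A" unfolding \<phi>0_def xs[symmetric]
    by (auto simp: in_set_conv_nth)
  have lc: "\<And>a b c::'m. a * b = a * c \<Longrightarrow> b = c" using assms(1) unfolding left_cancellative_def by blast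
  interpret H: hyp A \<delta> "length xs" \<phi>0
    by unfold_locales (use lc assms img in auto)
  have P0: "finite_presentation {..<length xs} H.R0 \<phi>0" by (rule H.pres)
  have part2: "dehn_le_power (dehn G R \<phi>) (log (4/3) 5 + 1)" if P': "finite_presentation G R \<phi>" for G R and \<phi> :: "nat \<Rightarrow> 'm"
  proof -
    obtain c1 c2 L where cb: "\<forall>u v. u \<in> lists G \<longrightarrow> v \<in> lists G \<longrightarrow> eval_word \<phi> u = eval_word \<phi> v
       \<longrightarrow> ar R u v (c1 * (length u + length v) + c2 * PB (L * (length u + length v)))"
      using transfer[OF P0 H.bound0 PB_mono P'] by blast
    have fG: "finite G" using P' unfolding finite_presentation_def by blast
    have dl: "dehn G R \<phi> n \<le> c1 * n + c2 * PB (L * n)" for n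
      by (rule dehn_le[OF fG]) (use cb in \<open>auto intro: add_mono mult_le_mono2 PB_mono\<close>)
    have fb: "dehn G R \<phi> j \<le> c1 * j + c2 * (30 * (2 * L + 1) ^ 6) * j ^ 6" if j1: "1 \<le> j" for j
    proof -
      have x: "c2 * PB (L * j) \<le> c2 * (30 * (2 * L + 1) ^ 6 * j ^ 6)" using PB_poly[OF j1] by (rule mult_le_mono2)
      have "c2 * (30 * (2 * L + 1) ^ 6) * j ^ 6 = c2 * (30 * (2 * L + 1) ^ 6 * j ^ 6)" by (simp only: mult.assoc)
      then show ?thesis using dl[of j] x by linarith
    qed
    show ?thesis by (rule final_power[OF dehn_zero fb])
  qed
  show ?thesis using P0 part2 by blast
qed


end
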